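(* Let $A$, $I$ and $d$ be fixed positive integers with $d<\min\{I,A-1\}$. Let $\mathbb{P}(C)$ be the probability that a profile chosen uniformly at random from $\mathcal{P}_{A,I}$ contains a circulant pathology of size $k\geq d+2$. Then $$\mathbb{P}(C) \geq 1 - \left(1 - \sum_{k=d+2}^{I} B_k \right)^{\left\lfloor \frac{A}{d+2} \right\rfloor},$$ where $$B_k=\binom{I}{k} \genfrac\{\}{0pt}{0}{k}{d+2} (d+2)! \left(\frac{1}{(d+2)!}\right)^k \left(1 - \frac{d+2}{(d+2)!}\right)^{I-k}$$ and $\genfrac\{\}{0pt}{1}{k}{d+2}$ denotes a Stirling number of the second kind.
   Context: There are $A$ alternatives and $I$ individuals. A preference is a strict total order (ranking without ties) on the $A$ alternatives; $a>_i b$ means individual $i$ prefers $a$ to $b$. A profile assigns a preference to each of the $I$ individuals; $\mathcal{P}_{A,I}$ is the set of all profiles, so a uniformly random profile assigns to each individual an independent uniformly random preference among the $A!$ possible ones. A circulant pathology of size $k$ in a profile consists of $k$ distinct alternatives $a_1,\dots,a_k$ and $k$ distinct individuals $1,\dots,k$ such that for each $j\in\{1,\dots,k\}$, individual $j$'s preference restricted to $\{a_1,\dots,a_k\}$ is $a_j >_j a_{j+1} >_j \dots >_j a_k >_j a_1 >_j \dots >_j a_{j-1}$ (the cyclic shift of $a_1>\dots>a_k$ starting at $a_j$). *)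

theory Defs
  imports Complex_Main "HOL-Combinatorics.Stirling" "HOL-Library.FuncSet"
begin

text \<open>A preference (strict total order
on the alternatives) is represented as a list enumerating all alternatives exactly once,
from most preferred to least preferred.\<close>

definition preferences :: "nat \<Rightarrow> nat list set" where
  "preferences A = {xs. distinct xs \<and> set xs = {0..<A}}"

definition prefers :: "nat list \<Rightarrow> nat \<Rightarrow> nat \<Rightarrow> bool" where
  "prefers xs a b = (\<exists>p q. p < q \<and> q < length xs \<and> xs ! p = a \<and> xs ! q = b)"

definition profiles :: "nat \<Rightarrow> nat \<Rightarrow> (nat \<Rightarrow> nat list) set" where
  "profiles A I = Pi\<^sub>E {0..<I} (\<lambda>_. preferences A)"

definition has_circulant_pathology :: "nat \<Rightarrow> nat \<Rightarrow> (nat \<Rightarrow> nat list) \<Rightarrow> nat \<Rightarrow> bool" where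
  "has_circulant_pathology A I P k =
     (\<exists>a v. inj_on a {0..<k} \<and> a ` {0..<k} \<subseteq> {0..<A} \<and>
            inj_on v {0..<k} \<and> v ` {0..<k} \<subseteq> {0..<I} \<and>
            (\<forall>j<k. \<forall>t<k. \<forall>t'<k. t < t' \<longrightarrow>
                prefers (P (v j)) (a ((j + t) mod k)) (a ((j + t') mod k))))"

definition B_term :: "nat \<Rightarrow> nat \<Rightarrow> nat \<Rightarrow> real" where
  "B_term I d k = real (I choose k) * real (Stirling k (d + 2)) * real (fact (d + 2))
      * (1 / real (fact (d + 2))) ^ k
      * (1 - real (d + 2) / real (fact (d + 2))) ^ (I - k)"

end

theory Submission
  imports Defs "HOL-Combinatorics.Multiset_Permutations"
begin

lemma surj_count:
  assumes "finite K" "finite R"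
  shows "card {f \<in> K \<rightarrow>\<^sub>E R. f ` K = R} = Stirling (card K) (card R) * fact (card R)"
  using assms
proof (induction K arbitrary: R rule: finite_induct)
  case empty
  then show ?case
    by (cases "card R") (auto simp: PiE_empty_domain)
next
  case (insert x K R)
  show ?case
  proof (cases "R = {}")
    case True
    then show ?thesis using insert by (auto simp: PiE_empty_range)
  next
    case False
    then obtain r where r: "card R = Suc r" using insert(4) by (cases "card R") auto
    define Bv where "Bv v = {g \<in> K \<rightarrow>\<^sub>E R. g ` K = R} \<union> {g \<in> K \<rightarrow>\<^sub>E (R - {v}). g ` K = R - {v}}" for v
    have bij: "bij_betw (\<lambda>f. (f x, restrict f K)) {f \<in> insert x K \<rightarrow>\<^sub>E R. f ` insert x K = R} (SIGMA v:R. Bv v)"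
    proof (rule bij_betw_byWitness[where f'="\<lambda>(v,g). g(x:=v)"])
      show "\<forall>a\<in>{f \<in> insert x K \<rightarrow>\<^sub>E R. f ` insert x K = R}. (\<lambda>(v, g). g(x := v)) (a x, restrict a K) = a"
        using insert(2) by (auto simp: PiE_def extensional_def fun_eq_iff)
      show "\<forall>a'\<in>(SIGMA v:R. Bv v). (\<lambda>f. (f x, restrict f K)) ((\<lambda>(v, g). g(x := v)) a') = a'"
        using insert(2) by (auto simp: Bv_def PiE_def extensional_def fun_eq_iff)
      show "(\<lambda>f. (f x, restrict f K)) ` {f \<in> insert x K \<rightarrow>\<^sub>E R. f ` insert x K = R} \<subseteq> (SIGMA v:R. Bv v)"
      proof -
        have "f x \<in> R \<and> restrict f K \<in> Bv (f x)" if f: "f \<in> insert x K \<rightarrow>\<^sub>E R" "f ` insert x K = R" for f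
        proof -
        have "restrict f K ` K = f ` K" by auto
        moreover have "insert (f x) (f ` K) = R" using f(2) by auto
        ultimately have e: "f ` K = R \<or> f ` K = R - {f x}" using insert(2) by blast
        have fK: "f ` K \<subseteq> R" using f by auto
        show "f x \<in> R \<and> restrict f K \<in> Bv (f x)"
        proof (cases "f ` K = R")
          case True
          then show ?thesis using f unfolding Bv_def by (auto simp: PiE_def extensional_def)
        next
          case False
          then have "f ` K = R - {f x}" using e by blast
          then show ?thesis using f unfolding Bv_def by (auto simp: PiE_def extensional_def)
        qed
        qed
        then show ?thesis by auto
      qed
      show "(\<lambda>(v, g). g(x := v)) ` (SIGMA v:R. Bv v) \<subseteq> {f \<in> insert x K \<rightarrow>\<^sub>E R. f ` insert x K = R}"
      proof -
        have "g(x := v) \<in> insert x K \<rightarrow>\<^sub>E R \<and> g(x := v) ` insert x K = R" if v: "v \<in> R" and g: "g \<in> Bv v" for v g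
        proof -
        have "g(x:=v) ` K = g ` K" using insert(2) by auto
        then show "g(x := v) \<in> insert x K \<rightarrow>\<^sub>E R \<and> g(x := v) ` insert x K = R"
          using v g insert(2) unfolding Bv_def by (auto simp: PiE_def extensional_def)
        qed
        then show ?thesis by (auto simp del: fun_upd_apply image_insert)
      qed
    qed
    have cardB: "card (Bv v) = Stirling (card K) (Suc r) * fact (Suc r) + Stirling (card K) r * fact r"
      if v: "v \<in> R" for v
    proof -
      have d: "{g \<in> K \<rightarrow>\<^sub>E R. g ` K = R} \<inter> {g \<in> K \<rightarrow>\<^sub>E (R - {v}). g ` K = R - {v}} = {}"
        using v by auto
      have "card (Bv v) = card {g \<in> K \<rightarrow>\<^sub>E R. g ` K = R} + card {g \<in> K \<rightarrow>\<^sub>E (R - {v}). g ` K = R - {v}}"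
        unfolding Bv_def using insert(1,4) d by (intro card_Un_disjoint) (auto intro: finite_PiE simp: finite_PiE)
      also have "\<dots> = Stirling (card K) (Suc r) * fact (Suc r) + Stirling (card K) r * fact r"
        using insert.IH[of R] insert.IH[of "R - {v}"] insert(4) r v by simp
      finally show ?thesis .
    qed
    have "card {f \<in> insert x K \<rightarrow>\<^sub>E R. f ` insert x K = R} = card (SIGMA v:R. Bv v)"
      using bij_betw_same_card[OF bij] .
    also have "\<dots> = (\<Sum>v\<in>R. card (Bv v))"
      using insert(1,4) unfolding Bv_def by (intro card_SigmaI) (auto simp: finite_PiE)
    also have "\<dots> = Suc r * (Stirling (card K) (Suc r) * fact (Suc r) + Stirling (card K) r * fact r)"
      using cardB r by simp
    also have "\<dots> = Stirling (Suc (card K)) (Suc r) * fact (Suc r)"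
      by (simp add: algebra_simps)
    finally show ?thesis using insert(1,2) r by simp
  qed
qed

definition blk :: "nat \<Rightarrow> nat \<Rightarrow> nat list" where "blk m b = [b*m..<b*m+m]"
definition Sb :: "nat \<Rightarrow> nat \<Rightarrow> nat set" where "Sb m b = {b*m..<b*m+m}"

lemma prefers_Cons: "prefers xs a b \<Longrightarrow> prefers (x # xs) a b"
  unfolding prefers_def
  by (metis Suc_less_eq length_Cons nth_Cons_Suc)

lemma filter_prefers:
  "t < t' \<Longrightarrow> t' < length (filter P xs) \<Longrightarrow> prefers xs (filter P xs ! t) (filter P xs ! t')"
proof (induction xs arbitrary: t t')
  case Nil
  then show ?case by simp
next
  case (Cons x xs)
  show ?case
  proof (cases "P x")
    case True
    show ?thesis
    proof (cases t)
      case 0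
      have "t' - 1 < length (filter P xs)" using Cons.prems True 0 by auto
      then have "filter P xs ! (t' - 1) \<in> set xs" using nth_mem by fastforce
      then obtain q where q: "q < length xs" "xs ! q = filter P xs ! (t' - 1)"
        by (metis in_set_conv_nth)
      have "prefers (x # xs) x (filter P xs ! (t' - 1))"
        unfolding prefers_def using q by (intro exI[of _ 0] exI[of _ "Suc q"]) auto
      then show ?thesis using True 0 Cons.prems by (cases t') auto
    next
      case (Suc s)
      then obtain s' where t': "t' = Suc s'" using Cons.prems by (cases t') auto
      have "prefers xs (filter P xs ! s) (filter P xs ! s')"
        using Cons.IH[of s s'] Cons.prems True Suc t' by simp
      then show ?thesis using True Suc t' by (simp add: prefers_Cons)
    qed
  next
    case False
    then show ?thesis using Cons by (simp add: prefers_Cons)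
  qed
qed

lemma pathology_from_block:
  assumes m: "0 < m" and b: "b < n" and nm: "n * m \<le> A"
    and cov: "\<forall>j<m. \<exists>i<I. filter (\<lambda>x. x \<in> Sb m b) (P i) = rotate j (blk m b)"
  shows "has_circulant_pathology A I P m"
proof -
  define a where "a t = b*m + t" for t
  define v where "v j = (SOME i. i<I \<and> filter (\<lambda>x. x \<in> Sb m b) (P i) = rotate j (blk m b))" for j
  have v: "v j < I \<and> filter (\<lambda>x. x \<in> Sb m b) (P (v j)) = rotate j (blk m b)" if "j < m" for j
    unfolding v_def using cov that by (metis (mono_tags, lifting) someI_ex)
  have len: "length (blk m b) = m" by (simp add: blk_def)
  have rot_nth: "rotate j (blk m b) ! t = b*m + (j + t) mod m" if "t < m" for j t
    using that len m by (simp add: nth_rotate blk_def)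
  have bm: "b*m + m \<le> A"
  proof -
    have "(b+1)*m \<le> n*m" using b by (intro mult_right_mono) auto
    then show ?thesis using nm by simp
  qed
  show ?thesis
    unfolding has_circulant_pathology_def
  proof (rule exI[of _ a], rule exI[of _ v], intro conjI allI impI)
    show "inj_on a {0..<m}" by (auto simp: a_def inj_on_def)
    show "a ` {0..<m} \<subseteq> {0..<A}" using bm by (auto simp: a_def)
    show "inj_on v {0..<m}"
    proof (rule inj_onI)
      fix j j' assume j: "j \<in> {0..<m}" "j' \<in> {0..<m}" "v j = v j'"
      then have "rotate j (blk m b) = rotate j' (blk m b)" using v[of j] v[of j'] by auto
      then have "rotate j (blk m b) ! 0 = rotate j' (blk m b) ! 0" by simp
      then show "j = j'" using j m rot_nth[of 0] by simp
    qed
    show "v ` {0..<m} \<subseteq> {0..<I}" using v by auto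
    fix j t t' assume jt: "j < m" "t < m" "t' < m" "t < t'"
    have e: "filter (\<lambda>x. x \<in> Sb m b) (P (v j)) = rotate j (blk m b)" using v[OF jt(1)] by simp
    have "prefers (P (v j)) (filter (\<lambda>x. x \<in> Sb m b) (P (v j)) ! t) (filter (\<lambda>x. x \<in> Sb m b) (P (v j)) ! t')"
      using jt len by (intro filter_prefers) (simp_all add: e)
    then show "prefers (P (v j)) (a ((j + t) mod m)) (a ((j + t') mod m))"
      using jt by (simp add: e rot_nth a_def)
  qed
qed

definition cmap :: "nat \<Rightarrow> nat \<Rightarrow> nat list \<Rightarrow> nat \<Rightarrow> nat list" where
  "cmap m n xs = (\<lambda>b\<in>{0..<n}. filter (\<lambda>x. x \<in> Sb m b) xs)"

lemma Sb_div: "0 < m \<Longrightarrow> y \<in> Sb m b \<longleftrightarrow> y div m = b"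
  unfolding Sb_def
  by (metis atLeastLessThan_iff add.commute div_nat_eqI div_times_less_eq_dividend less_mult_imp_div_less
        mult.commute mult_Suc dividend_less_div_times)

lemma blk_le: "(b::nat) < n \<Longrightarrow> n * m \<le> A \<Longrightarrow> b*m + m \<le> A"
proof -
  assume "b < n" "n * m \<le> A"
  moreover have "(b+1)*m \<le> n*m" using \<open>b < n\<close> by (intro mult_right_mono) auto
  ultimately show ?thesis by simp
qed

lemma finite_preferences: "finite (preferences A)"
proof -
  have "preferences A = permutations_of_set {0..<A}"
    by (auto simp: preferences_def permutations_of_set_def)
  then show ?thesis by simp
qed

lemma card_Sb: "card (Sb m b) = m" by (simp add: Sb_def)

lemma cmap_in:
  assumes "xs \<in> preferences A" "n * m \<le> A"
  shows "cmap m n xs \<in> PiE {0..<n} (\<lambda>b. permutations_of_set (Sb m b))"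
proof -
  have "filter (\<lambda>x. x \<in> Sb m b) xs \<in> permutations_of_set (Sb m b)" if b: "b < n" for b
  proof -
    have "Sb m b \<subseteq> {0..<A}" using blk_le[OF b assms(2)] by (auto simp: Sb_def)
    then show ?thesis using assms(1) by (auto simp: permutations_of_set_def preferences_def)
  qed
  then show ?thesis by (auto simp: cmap_def)
qed

lemma fiber_le:
  assumes m: "0 < m" and nm: "n * m \<le> A"
    and s1: "\<sigma> \<in> PiE {0..<n} (\<lambda>b. permutations_of_set (Sb m b))"
    and s2: "\<sigma>' \<in> PiE {0..<n} (\<lambda>b. permutations_of_set (Sb m b))"
  shows "card {xs\<in>preferences A. cmap m n xs = \<sigma>} \<le> card {xs\<in>preferences A. cmap m n xs = \<sigma>'}"
proof -
  have d1: "distinct (\<sigma> b)" "set (\<sigma> b) = Sb m b" if "b < n" for b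
    using s1 that by (auto simp: permutations_of_set_def)
  have d2: "distinct (\<sigma>' b)" "set (\<sigma>' b) = Sb m b" if "b < n" for b
    using s2 that by (auto simp: permutations_of_set_def)
  have len1: "length (\<sigma> b) = m" if "b < n" for b
    using distinct_card[OF d1(1)[OF that]] d1(2)[OF that] card_Sb by simp
  have len2: "length (\<sigma>' b) = m" if "b < n" for b
    using distinct_card[OF d2(1)[OF that]] d2(2)[OF that] card_Sb by simp
  define idx where "idx x = (THE t. t < m \<and> \<sigma> (x div m) ! t = x)" for x
  define \<pi> where "\<pi> x = (if x < n*m then \<sigma>' (x div m) ! idx x else x)" for x
  have inS: "x \<in> Sb m b \<Longrightarrow> b < n \<Longrightarrow> x < n * m" for x b
    using blk_le[of b n m "n*m"] by (auto simp: Sb_def)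
  have key: "\<pi> (\<sigma> b ! t) = \<sigma>' b ! t" if b: "b < n" and t: "t < m" for b t
  proof -
    have x: "\<sigma> b ! t \<in> Sb m b" using d1(2)[OF b] nth_mem[of t "\<sigma> b"] len1[OF b] t by auto
    then have dv: "\<sigma> b ! t div m = b" using Sb_div[OF m] by simp
    have "idx (\<sigma> b ! t) = t"
      unfolding idx_def dv
      by (rule the_equality) (use t len1[OF b] d1(1)[OF b] nth_eq_iff_index_eq in auto)
    then show ?thesis using inS[OF x b] dv by (simp add: \<pi>_def)
  qed
  have rep: "\<exists>t<m. x = \<sigma> (x div m) ! t \<and> x div m < n" if "x < n*m" for x
  proof -
    have b: "x div m < n" using that m by (simp add: less_mult_imp_div_less)
    have "x \<in> Sb m (x div m)" using Sb_div[OF m] by simp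
    then have "x \<in> set (\<sigma> (x div m))" using d1(2)[OF b] by simp
    then show ?thesis using len1[OF b] b by (metis in_set_conv_nth)
  qed
  have piS: "\<pi> x \<in> Sb m (x div m)" if xl: "x < n*m" for x
  proof -
    obtain t where t: "t < m" "x = \<sigma> (x div m) ! t" "x div m < n" using rep[OF xl] by blast
    have "\<pi> x = \<sigma>' (x div m) ! t" using key[OF t(3) t(1)] t(2) by simp
    then show ?thesis using d2[OF t(3)] len2[OF t(3)] t(1) by (metis nth_mem)
  qed
  have pres: "(\<pi> x \<in> Sb m b) = (x \<in> Sb m b)" if "x < A" for x b
  proof (cases "x < n*m")
    case True
    then show ?thesis using piS[OF True] Sb_div[OF m] by metis
  next
    case False
    then show ?thesis by (simp add: \<pi>_def)
  qed
  have inj: "inj_on \<pi> {0..<A}"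
  proof (rule inj_onI)
    fix x y assume x: "x \<in> {0..<A}" and y: "y \<in> {0..<A}" and e: "\<pi> x = \<pi> y"
    show "x = y"
    proof (cases "x < n*m")
      case xT: True
      show ?thesis
      proof (cases "y < n*m")
        case yT: True
        obtain t where t: "t < m" "x = \<sigma> (x div m) ! t" "x div m < n" using rep[OF xT] by blast
        obtain u where u: "u < m" "y = \<sigma> (y div m) ! u" "y div m < n" using rep[OF yT] by blast
        have "x div m = y div m" using piS[OF xT] piS[OF yT] e Sb_div[OF m] by metis
        moreover have "\<sigma>' (x div m) ! t = \<sigma>' (y div m) ! u"
          using key[OF t(3) t(1)] key[OF u(3) u(1)] t(2) u(2) e by simp
        ultimately have "t = u" using nth_eq_iff_index_eq[OF d2(1)[OF t(3)]] len2[OF t(3)] t(1) u(1) by auto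
        then show ?thesis using t u \<open>x div m = y div m\<close> by metis
      next
        case yF: False
        have "\<pi> x < n*m" using piS[OF xT] inS rep[OF xT] by blast
        then show ?thesis using yF e by (simp add: \<pi>_def)
      qed
    next
      case xF: False
      show ?thesis
      proof (cases "y < n*m")
        case yT: True
        have "\<pi> y < n*m" using piS[OF yT] inS rep[OF yT] by blast
        then show ?thesis using xF e by (simp add: \<pi>_def)
      next
        case False
        then show ?thesis using xF e by (simp add: \<pi>_def)
      qed
    qed
  qed
  have img: "\<pi> ` {0..<A} \<subseteq> {0..<A}"
  proof
    fix y assume "y \<in> \<pi> ` {0..<A}"
    then obtain x where x: "x < A" "y = \<pi> x" by auto
    show "y \<in> {0..<A}"
    proof (cases "x < n*m")
      case True
      then have "y < n*m" using piS[OF True] inS rep[OF True] x by blast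
      then show ?thesis using nm by simp
    next
      case False then show ?thesis using x by (simp add: \<pi>_def)
    qed
  qed
  have surj: "\<pi> ` {0..<A} = {0..<A}" using endo_inj_surj[OF _ img inj] by simp
  have maps: "map \<pi> xs \<in> {xs\<in>preferences A. cmap m n xs = \<sigma>'}" if xs: "xs \<in> {xs\<in>preferences A. cmap m n xs = \<sigma>}" for xs
  proof -
    have p: "distinct xs" "set xs = {0..<A}" using xs by (auto simp: preferences_def)
    have "distinct (map \<pi> xs)" using p inj by (simp add: distinct_map)
    moreover have "set (map \<pi> xs) = {0..<A}" using p surj by simp
    moreover have "cmap m n (map \<pi> xs) = \<sigma>'"
    proof
      fix b
      show "cmap m n (map \<pi> xs) b = \<sigma>' b"
      proof (cases "b < n")
        case b: True
        have f: "filter (\<lambda>x. x \<in> Sb m b) xs = \<sigma> b" using xs b unfolding cmap_def by (auto dest: fun_cong[of _ _ b])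
        have 1: "filter (\<lambda>x. x \<in> Sb m b) (map \<pi> xs) = map \<pi> (filter (\<lambda>x. \<pi> x \<in> Sb m b) xs)"
          by (simp add: filter_map o_def)
        have 2: "filter (\<lambda>x. \<pi> x \<in> Sb m b) xs = filter (\<lambda>x. x \<in> Sb m b) xs"
          using pres p(2) by (intro filter_cong) auto
        have 3: "map \<pi> (\<sigma> b) = \<sigma>' b"
          by (rule nth_equalityI) (use len1[OF b] len2[OF b] key[OF b] in auto)
        show ?thesis using b f 1 2 3 by (simp add: cmap_def)
      next
        case False
        then show ?thesis using s2 by (simp add: cmap_def PiE_def extensional_def)
      qed
    qed
    ultimately show ?thesis by (simp add: preferences_def)
  qed
  have "inj_on (map \<pi>) {xs\<in>preferences A. cmap m n xs = \<sigma>}"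
  proof (rule inj_onI)
    fix xs ys assume "xs \<in> {xs\<in>preferences A. cmap m n xs = \<sigma>}" "ys \<in> {xs\<in>preferences A. cmap m n xs = \<sigma>}"
      "map \<pi> xs = map \<pi> ys"
    then show "xs = ys" using inj by (intro map_inj_on[of \<pi> xs ys]) (auto simp: preferences_def inj_on_def)
  qed
  then show ?thesis
    by (rule card_inj_on_le) (use maps finite_preferences in auto)
qed

lemma card_by_fibers:
  assumes "finite S" "finite T" "g ` S \<subseteq> T"
  shows "card S = (\<Sum>y\<in>T. card {x\<in>S. g x = y})"
  using sum.group[OF assms, of "\<lambda>_. 1::nat"] by simp

lemma sum_pow_card:
  assumes "finite J"
  shows "(\<Sum>K\<in>Pow J. (\<phi> (card K) :: nat)) = (\<Sum>k=0..card J. (card J choose k) * \<phi> k)"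
proof -
  have "(\<Sum>K\<in>Pow J. \<phi> (card K)) = (\<Sum>k\<in>{0..card J}. \<Sum>K\<in>{K\<in>Pow J. card K = k}. \<phi> (card K))"
    using assms by (intro sum.group[symmetric]) (auto intro: card_mono)
  also have "\<dots> = (\<Sum>k\<in>{0..card J}. card {K\<in>Pow J. card K = k} * \<phi> k)"
    by (intro sum.cong refl) simp
  also have "\<dots> = (\<Sum>k=0..card J. (card J choose k) * \<phi> k)"
  proof (intro sum.cong refl)
    fix k
    have "{K\<in>Pow J. card K = k} = {K. K \<subseteq> J \<and> card K = k}" by auto
    then show "card {K\<in>Pow J. card K = k} * \<phi> k = (card J choose k) * \<phi> k"
      using n_subsets[OF assms] by simp
  qed
  finally show ?thesis .
qed

lemma cover_count:
  assumes J: "finite J" and Q: "finite Q" and RQ: "R \<subseteq> Q"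
  shows "card {z \<in> J \<rightarrow>\<^sub>E Q. R \<subseteq> z ` J} =
    (\<Sum>k=0..card J. (card J choose k) * (Stirling k (card R) * fact (card R)) * (card Q - card R) ^ (card J - k))"
proof -
  have R: "finite R" using Q RQ finite_subset by blast
  define S where "S = {z \<in> J \<rightarrow>\<^sub>E Q. R \<subseteq> z ` J}"
  have fS: "finite S" unfolding S_def using J Q by (auto simp: finite_PiE)
  have "card S = (\<Sum>K\<in>Pow J. card {z\<in>S. {i\<in>J. z i \<in> R} = K})"
    using fS J by (intro card_by_fibers) auto
  also have "\<dots> = (\<Sum>K\<in>Pow J. Stirling (card K) (card R) * fact (card R) * (card Q - card R) ^ (card J - card K))"
  proof (intro sum.cong refl)
    fix K assume K: "K \<in> Pow J"
    then have KJ: "K \<subseteq> J" by auto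
    have fK: "finite K" using KJ J finite_subset by blast
    have bij: "bij_betw (\<lambda>z. (restrict z K, restrict z (J - K))) {z\<in>S. {i\<in>J. z i \<in> R} = K}
       ({f \<in> K \<rightarrow>\<^sub>E R. f ` K = R} \<times> ((J - K) \<rightarrow>\<^sub>E (Q - R)))"
    proof (rule bij_betw_byWitness[where f'="\<lambda>(f,h). (\<lambda>i. if i \<in> K then f i else h i)"])
      show "\<forall>a\<in>{z \<in> S. {i \<in> J. z i \<in> R} = K}.
         (\<lambda>(f, h). \<lambda>i. if i \<in> K then f i else h i) (restrict a K, restrict a (J - K)) = a"
        using KJ by (auto simp: S_def PiE_def extensional_def fun_eq_iff)
      show "\<forall>a'\<in>{f \<in> K \<rightarrow>\<^sub>E R. f ` K = R} \<times> (J - K \<rightarrow>\<^sub>E Q - R).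
         (\<lambda>z. (restrict z K, restrict z (J - K))) ((\<lambda>(f, h). \<lambda>i. if i \<in> K then f i else h i) a') = a'"
        by (auto simp: PiE_def extensional_def fun_eq_iff)
      have "restrict z K \<in> K \<rightarrow>\<^sub>E R \<and> restrict z K ` K = R \<and> restrict z (J - K) \<in> J - K \<rightarrow>\<^sub>E Q - R"
        if z: "z \<in> S" "{i \<in> J. z i \<in> R} = K" for z
      proof -
        have "restrict z K ` K = z ` K" by auto
        also have "\<dots> = R"
        proof
          show "z ` K \<subseteq> R" using z by auto
          show "R \<subseteq> z ` K"
          proof
            fix r assume "r \<in> R"
            then obtain i where "i \<in> J" "r = z i" using z unfolding S_def by auto
            then show "r \<in> z ` K" using z \<open>r \<in> R\<close> by auto
          qed
        qed
        finally show ?thesis using z KJ unfolding S_def by (auto simp: PiE_def extensional_def)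
      qed
      then show "(\<lambda>z. (restrict z K, restrict z (J - K))) ` {z \<in> S. {i \<in> J. z i \<in> R} = K}
         \<subseteq> {f \<in> K \<rightarrow>\<^sub>E R. f ` K = R} \<times> (J - K \<rightarrow>\<^sub>E Q - R)"
        by (intro image_subsetI) (simp only: mem_Collect_eq mem_Times_iff fst_conv snd_conv)
      have "(\<lambda>i. if i \<in> K then f i else h i) \<in> S \<and> {i \<in> J. (if i \<in> K then f i else h i) \<in> R} = K"
        if f: "f \<in> K \<rightarrow>\<^sub>E R" "f ` K = R" and h: "h \<in> J - K \<rightarrow>\<^sub>E Q - R" for f h
      proof -
        have "R \<subseteq> (\<lambda>i. if i \<in> K then f i else h i) ` J"
        proof
          fix r assume "r \<in> R"
          then obtain i where "i \<in> K" "r = f i" using f by auto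
          then show "r \<in> (\<lambda>i. if i \<in> K then f i else h i) ` J" using KJ by (intro image_eqI[of _ _ i]) auto
        qed
        then show ?thesis using f h KJ RQ unfolding S_def by (auto simp: PiE_def extensional_def Pi_def image_subset_iff)
      qed
      then show "(\<lambda>(f, h). \<lambda>i. if i \<in> K then f i else h i) ` ({f \<in> K \<rightarrow>\<^sub>E R. f ` K = R} \<times> (J - K \<rightarrow>\<^sub>E Q - R))
          \<subseteq> {z \<in> S. {i \<in> J. z i \<in> R} = K}" by auto
    qed
    have "card {z\<in>S. {i\<in>J. z i \<in> R} = K} = card {f \<in> K \<rightarrow>\<^sub>E R. f ` K = R} * card ((J - K) \<rightarrow>\<^sub>E (Q - R))"
      using bij_betw_same_card[OF bij] by (simp add: card_cartesian_product)
    also have "\<dots> = Stirling (card K) (card R) * fact (card R) * (card Q - card R) ^ (card J - card K)"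
      using surj_count[OF fK R] J KJ RQ R fK card_Diff_subset[OF fK KJ]
      by (simp add: card_PiE card_Diff_subset)
    finally show "card {z\<in>S. {i\<in>J. z i \<in> R} = K} = Stirling (card K) (card R) * fact (card R) * (card Q - card R) ^ (card J - card K)" .
  qed
  also have "\<dots> = (\<Sum>k=0..card J. (card J choose k) * (Stirling k (card R) * fact (card R) * (card Q - card R) ^ (card J - k)))"
    using sum_pow_card[OF J, of "\<lambda>k. Stirling k (card R) * fact (card R) * (card Q - card R) ^ (card J - k)"] .
  finally show ?thesis unfolding S_def by (simp add: mult.assoc)
qed

lemma swap_bij:
  "bij_betw (\<lambda>y. \<lambda>b\<in>B. \<lambda>i\<in>J. y i b) (PiE J (\<lambda>i. PiE B L)) (PiE B (\<lambda>b. PiE J (\<lambda>i. L b)))"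
  by (rule bij_betw_byWitness[where f'="\<lambda>w. \<lambda>i\<in>J. \<lambda>b\<in>B. w b i"])
     (auto simp: PiE_def extensional_def fun_eq_iff Pi_def)

lemma bij_pred: "bij_betw f X Y \<Longrightarrow> bij_betw f {x\<in>X. Q (f x)} {y\<in>Y. Q y}"
  unfolding bij_betw_def by (auto intro: inj_on_subset)

lemma rot_perm: "rotate j (blk m b) \<in> permutations_of_set (Sb m b)"
  by (simp add: permutations_of_set_def blk_def Sb_def)

lemma rot_inj: "0 < m \<Longrightarrow> inj_on (\<lambda>j. rotate j (blk m b)) {0..<m}"
proof (rule inj_onI)
  fix j j' assume m: "0 < m" and j: "j \<in> {0..<m}" "j' \<in> {0..<m}" "rotate j (blk m b) = rotate j' (blk m b)"
  have len: "length (blk m b) = m" by (simp add: blk_def)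
  have "rotate j (blk m b) ! 0 = rotate j' (blk m b) ! 0" using j by simp
  then show "j = j'" using j m len by (simp add: nth_rotate blk_def)
qed

lemma block_bad_card:
  assumes m: "0 < m"
  shows "card {z \<in> PiE {0..<I} (\<lambda>_. permutations_of_set (Sb m b)). \<exists>j<m. \<forall>i<I. z i \<noteq> rotate j (blk m b)}
     = fact m ^ I - (\<Sum>k=0..I. (I choose k) * (Stirling k m * fact m) * (fact m - m)^(I-k))"
proof -
  define W where "W = PiE {0..<I} (\<lambda>_. permutations_of_set (Sb m b))"
  define R where "R = (\<lambda>j. rotate j (blk m b)) ` {0..<m}"
  have RQ: "R \<subseteq> permutations_of_set (Sb m b)" unfolding R_def using rot_perm by auto
  have cR: "card R = m" unfolding R_def using card_image[OF rot_inj[OF m]] by simp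
  have cQ: "card (permutations_of_set (Sb m b)) = fact m" by (simp add: card_Sb Sb_def)
  have eq: "{z \<in> W. \<exists>j<m. \<forall>i<I. z i \<noteq> rotate j (blk m b)} = W - {z \<in> W. R \<subseteq> z ` {0..<I}}"
  proof -
    have "(\<exists>j<m. \<forall>i<I. z i \<noteq> rotate j (blk m b)) \<longleftrightarrow> \<not> R \<subseteq> z ` {0..<I}" for z
      unfolding R_def image_subset_iff image_iff atLeastLessThan_iff by force
    then show ?thesis by blast
  qed
  have fW: "finite W" unfolding W_def by (auto intro: finite_PiE)
  have "card {z \<in> W. \<exists>j<m. \<forall>i<I. z i \<noteq> rotate j (blk m b)} = card W - card {z \<in> W. R \<subseteq> z ` {0..<I}}"
    unfolding eq using fW by (intro card_Diff_subset) auto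
  also have "card W = fact m ^ I" unfolding W_def by (simp add: card_PiE cQ)
  also have "card {z \<in> W. R \<subseteq> z ` {0..<I}} = (\<Sum>k=0..I. (I choose k) * (Stirling k m * fact m) * (fact m - m)^(I-k))"
    unfolding W_def using cover_count[of "{0..<I}" "permutations_of_set (Sb m b)" R] RQ cR cQ
    by (simp add: Sb_def)
  finally show ?thesis unfolding W_def .
qed

lemma cov_le:
  assumes m: "0 < m"
  shows "(\<Sum>k=0..I. (I choose k) * (Stirling k m * fact m) * (fact m - m)^(I-k)) \<le> fact m ^ I"
proof -
  define W where "W = PiE {0..<I} (\<lambda>_. permutations_of_set (Sb m 0))"
  define R where "R = (\<lambda>j. rotate j (blk m 0)) ` {0..<m}"
  have RQ: "R \<subseteq> permutations_of_set (Sb m 0)" unfolding R_def using rot_perm by auto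
  have cR: "card R = m" unfolding R_def using card_image[OF rot_inj[OF m]] by simp
  have cQ: "card (permutations_of_set (Sb m 0)) = fact m" by (simp add: card_Sb Sb_def)
  have fW: "finite W" unfolding W_def by (auto intro: finite_PiE)
  have "card {z \<in> W. R \<subseteq> z ` {0..<I}} \<le> card W" using fW by (intro card_mono) auto
  also have "card W = fact m ^ I" unfolding W_def by (simp add: card_PiE cQ)
  also have "card {z \<in> W. R \<subseteq> z ` {0..<I}} = (\<Sum>k=0..I. (I choose k) * (Stirling k m * fact m) * (fact m - m)^(I-k))"
    unfolding W_def using cover_count[of "{0..<I}" "permutations_of_set (Sb m 0)" R] RQ cR cQ
    by (simp add: Sb_def)
  finally show ?thesis .
qed

lemma B_gen:
  assumes "0 < Fn" "m \<le> Fn" "k \<le> I"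
  shows "real C * real S * real Fn * (1 / real Fn)^k * (1 - real m / real Fn)^(I-k)
     = real (C * (S * Fn) * (Fn - m)^(I-k)) / real Fn ^ I"
proof -
  define q where "q = real Fn"
  have q0: "q > 0" using assms(1) by (simp add: q_def)
  have e1: "(1 - real m / q) = (q - real m) / q" using q0 by (simp add: field_simps)
  have e2: "q ^ I = q ^ k * q ^ (I - k)" using assms by (simp add: power_add[symmetric])
  have e3: "real (C * (S * Fn) * (Fn - m)^(I-k)) = real C * (real S * q) * (q - real m)^(I-k)"
    using assms(2) by (simp add: q_def of_nat_diff)
  show ?thesis
    unfolding q_def[symmetric] e3 e1 e2 using q0
    by (simp add: power_divide field_simps)
qed

lemma B_eq:
  assumes "k \<le> I"
  shows "B_term I d k = real ((I choose k) * (Stirling k (d+2) * fact (d+2)) * (fact (d+2) - (d+2))^(I-k))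
                          / real (fact (d+2)) ^ I"
  unfolding B_term_def by (rule B_gen) (simp only: fact_gt_zero, rule fact_ge_self, rule assms)

lemma B_nonneg: "B_term I d k \<ge> 0"
proof -
  have "real (d + 2) \<le> real (fact (d+2))" using fact_ge_self[of "d+2"] by linarith
  then have "0 \<le> 1 - real (d + 2) / real (fact (d + 2))" by (simp add: field_simps)
  then show ?thesis unfolding B_term_def by simp
qed

theorem theorem3:
  fixes A I d :: nat
  assumes "0 < A" and "0 < I" and "0 < d" and "d < min I (A - 1)"
  shows "real (card {P \<in> profiles A I. \<exists>k\<ge>d + 2. has_circulant_pathology A I P k})
           / real (card (profiles A I))
         \<ge> 1 - (1 - (\<Sum>k = d + 2..I. B_term I d k)) ^ (A div (d + 2))"
proof -
  define m where "m = d + 2"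
  define n where "n = A div m"
  have m0: "0 < m" by (simp add: m_def)
  have nm: "n * m \<le> A" unfolding n_def by (simp add: div_times_less_eq_dividend)
  define L where "L b = permutations_of_set (Sb m b)" for b
  define Pn where "Pn = PiE {0..<n} L"
  define Cm where "Cm P = (\<lambda>i\<in>{0..<I}. cmap m n (P i))" for P :: "nat \<Rightarrow> nat list"
  define T where "T = PiE {0..<I} (\<lambda>_. Pn)"
  define Gd where "Gd y = (\<forall>b<n. \<exists>j<m. \<forall>i<I. y i b \<noteq> rotate j (blk m b))" for y :: "nat \<Rightarrow> nat \<Rightarrow> nat list"
  define cov where "cov = (\<Sum>k=0..I. (I choose k) * (Stirling k m * fact m) * (fact m - m)^(I-k))"
  define X where "X = fact m ^ I - cov"
  define Good where "Good = {P \<in> profiles A I. \<exists>k\<ge>d + 2. has_circulant_pathology A I P k}"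
  define Bad where "Bad = {P \<in> profiles A I. Gd (Cm P)}"
  have fL: "finite (L b)" for b by (simp add: L_def)
  have cL: "card (L b) = fact m" for b by (simp add: L_def card_Sb Sb_def)
  have fPn: "finite Pn" unfolding Pn_def using fL by (intro finite_PiE) auto
  have cPn: "card Pn = fact m ^ n" unfolding Pn_def by (simp add: card_PiE cL)
  have "Pn \<noteq> {}" unfolding Pn_def L_def by (simp add: PiE_eq_empty_iff Sb_def)
  then obtain \<sigma>0 where \<sigma>0: "\<sigma>0 \<in> Pn" by blast
  define F where "F = card {xs\<in>preferences A. cmap m n xs = \<sigma>0}"
  have fib: "card {xs\<in>preferences A. cmap m n xs = \<sigma>} = F" if "\<sigma> \<in> Pn" for \<sigma>
    using fiber_le[OF m0 nm, of \<sigma> \<sigma>0] fiber_le[OF m0 nm, of \<sigma>0 \<sigma>] that \<sigma>0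
    unfolding F_def Pn_def L_def by simp
  have cprefs: "card (preferences A) = card Pn * F"
  proof -
    have "card (preferences A) = (\<Sum>\<sigma>\<in>Pn. card {xs\<in>preferences A. cmap m n xs = \<sigma>})"
    proof (intro card_by_fibers finite_preferences fPn)
      show "cmap m n ` preferences A \<subseteq> Pn" unfolding Pn_def L_def using cmap_in[OF _ nm] by blast
    qed
    also have "\<dots> = (\<Sum>\<sigma>\<in>Pn. F)" using fib by simp
    finally show ?thesis by simp
  qed
  have prefs_pos: "card (preferences A) > 0"
  proof -
    have "preferences A = permutations_of_set {0..<A}"
      by (auto simp: preferences_def permutations_of_set_def)
    then show ?thesis by simp
  qed
  have Fpos: "F > 0" using prefs_pos cprefs by simp
  have cprof: "card (profiles A I) = (card Pn * F) ^ I"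
    by (simp add: profiles_def card_PiE cprefs)
  have fprof: "finite (profiles A I)" unfolding profiles_def using finite_preferences by (intro finite_PiE) auto
  have CmT: "Cm P \<in> T" if "P \<in> profiles A I" for P
    using that cmap_in[OF _ nm] unfolding Cm_def T_def Pn_def L_def profiles_def by auto
  have fT: "finite T" unfolding T_def using fPn by (intro finite_PiE) auto
  have fibP: "card {P\<in>profiles A I. Cm P = y} = F ^ I" if y: "y \<in> T" for y
  proof -
    have "{P\<in>profiles A I. Cm P = y} = PiE {0..<I} (\<lambda>i. {xs\<in>preferences A. cmap m n xs = y i})"
    proof (intro set_eqI iffI)
      fix P assume "P \<in> {P\<in>profiles A I. Cm P = y}"
      then show "P \<in> PiE {0..<I} (\<lambda>i. {xs\<in>preferences A. cmap m n xs = y i})"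
        unfolding profiles_def Cm_def by auto
    next
      fix P assume P: "P \<in> PiE {0..<I} (\<lambda>i. {xs\<in>preferences A. cmap m n xs = y i})"
      have "Cm P = y"
      proof
        fix i show "Cm P i = y i"
          using P y unfolding Cm_def T_def by (cases "i < I") (auto simp: PiE_def extensional_def)
      qed
      then show "P \<in> {P\<in>profiles A I. Cm P = y}" using P unfolding profiles_def by auto
    qed
    also have "card \<dots> = (\<Prod>i\<in>{0..<I}. card {xs\<in>preferences A. cmap m n xs = y i})" by (simp add: card_PiE)
    also have "\<dots> = (\<Prod>i\<in>{0..<I}. F)" using y fib unfolding T_def by (intro prod.cong) (auto intro!: fib dest: PiE_mem)
    finally show ?thesis by simp
  qed
  have cBad: "card Bad = card {y\<in>T. Gd y} * F ^ I"
  proof -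
    have "card Bad = (\<Sum>y\<in>{y\<in>T. Gd y}. card {P\<in>Bad. Cm P = y})"
      using fprof fT CmT unfolding Bad_def by (intro card_by_fibers) auto
    also have "\<dots> = (\<Sum>y\<in>{y\<in>T. Gd y}. F ^ I)"
    proof (intro sum.cong refl)
      fix y assume "y \<in> {y\<in>T. Gd y}"
      then have "{P\<in>Bad. Cm P = y} = {P\<in>profiles A I. Cm P = y}" "y \<in> T" unfolding Bad_def by auto
      then show "card {P\<in>Bad. Cm P = y} = F ^ I" using fibP by simp
    qed
    finally show ?thesis by simp
  qed
  have sub: "profiles A I - Bad \<subseteq> Good"
  proof
    fix P assume P: "P \<in> profiles A I - Bad"
    then obtain b where b: "b < n" and cv: "\<forall>j<m. \<exists>i<I. Cm P i b = rotate j (blk m b)"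
      unfolding Bad_def Gd_def by auto
    have "\<forall>j<m. \<exists>i<I. filter (\<lambda>x. x \<in> Sb m b) (P i) = rotate j (blk m b)"
    proof (intro allI impI)
      fix j assume "j < m"
      then obtain i where "i < I" "Cm P i b = rotate j (blk m b)" using cv by blast
      then show "\<exists>i<I. filter (\<lambda>x. x \<in> Sb m b) (P i) = rotate j (blk m b)"
        using b unfolding Cm_def cmap_def by (intro exI[of _ i]) auto
    qed
    then have "has_circulant_pathology A I P m" by (rule pathology_from_block[OF m0 b nm])
    then show "P \<in> Good" using P unfolding Good_def m_def by auto
  qed
  have fGood: "finite Good" unfolding Good_def using fprof by auto
  have BadS: "Bad \<subseteq> profiles A I" unfolding Bad_def by auto
  have cGood: "card (profiles A I) - card Bad \<le> card Good"
    using card_mono[OF fGood sub] card_Diff_subset[OF finite_subset[OF BadS fprof] BadS] by simp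
  define W where "W = PiE {0..<n} (\<lambda>b. PiE {0..<I} (\<lambda>i. L b))"
  define sw where "sw y = (\<lambda>b\<in>{0..<n}. \<lambda>i\<in>{0..<I}. y i b)" for y :: "nat \<Rightarrow> nat \<Rightarrow> nat list"
  define Qp where "Qp w = (\<forall>b\<in>{0..<n}. \<exists>j<m. \<forall>i<I. w b i \<noteq> rotate j (blk m b))" for w :: "nat \<Rightarrow> nat \<Rightarrow> nat list"
  have bij: "bij_betw sw {y\<in>T. Qp (sw y)} {w\<in>W. Qp w}"
    unfolding sw_def T_def W_def Pn_def by (intro bij_pred swap_bij)
  have "{y\<in>T. Qp (sw y)} = {y\<in>T. Gd y}"
    unfolding Qp_def sw_def Gd_def by auto
  then have c1: "card {y\<in>T. Gd y} = card {w\<in>W. Qp w}" using bij_betw_same_card[OF bij] by simp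
  have "{w\<in>W. Qp w} = PiE {0..<n} (\<lambda>b. {z \<in> PiE {0..<I} (\<lambda>_. L b). \<exists>j<m. \<forall>i<I. z i \<noteq> rotate j (blk m b)})"
    unfolding W_def Qp_def by (auto simp: PiE_def)
  then have "card {w\<in>W. Qp w} = (\<Prod>b\<in>{0..<n}. card {z \<in> PiE {0..<I} (\<lambda>_. L b). \<exists>j<m. \<forall>i<I. z i \<noteq> rotate j (blk m b)})"
    by (simp add: card_PiE)
  also have "\<dots> = (\<Prod>b\<in>{0..<n}. X)"
    unfolding L_def X_def cov_def using block_bad_card[OF m0] by simp
  finally have cGdT: "card {y\<in>T. Gd y} = X ^ n" using c1 by simp
  have cT: "card T = (fact m ^ I) ^ n"
    by (simp add: T_def card_PiE cPn power_mult[symmetric] mult.commute)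
  define q :: real where "q = real (fact m ^ I)"
  have q0: "q > 0" unfolding q_def by (simp only: of_nat_0_less_iff zero_less_power fact_gt_zero)
  have covle: "cov \<le> fact m ^ I" unfolding cov_def by (rule cov_le[OF m0])
  have sumB: "(\<Sum>k = 0..I. B_term I d k) = real cov / q"
  proof -
    have "\<forall>k\<in>{0..I}. B_term I d k = real ((I choose k) * (Stirling k m * fact m) * (fact m - m)^(I-k)) / real (fact m) ^ I"
      unfolding m_def by (intro ballI B_eq) simp
    then have "(\<Sum>k = 0..I. B_term I d k) = (\<Sum>k = 0..I. real ((I choose k) * (Stirling k m * fact m) * (fact m - m)^(I-k)) / real (fact m) ^ I)"
      by (intro sum.cong refl) blast
    also have "\<dots> = real cov / q"
      unfolding cov_def q_def by (simp only: sum_divide_distrib[symmetric] of_nat_sum[symmetric] of_nat_power)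
    finally show ?thesis .
  qed
  have sub_sum: "(\<Sum>k = d + 2..I. B_term I d k) \<le> (\<Sum>k = 0..I. B_term I d k)"
    by (intro sum_mono2) (auto simp: B_nonneg)
  have Xq: "real X / q = 1 - real cov / q"
    using covle q0 unfolding X_def q_def by (simp add: of_nat_diff field_simps)
  have Xq0: "0 \<le> real X / q" using q0 by simp
  have Xq1: "real X / q \<le> 1 - (\<Sum>k = d + 2..I. B_term I d k)"
    using Xq sumB sub_sum by simp
  have ratio: "real (card Bad) / real (card (profiles A I)) = (real X / q) ^ n"
  proof -
    have "real (card Bad) / real (card (profiles A I)) = (real X ^ n * real F ^ I) / (q ^ n * real F ^ I)"
      using cBad cGdT cprof cPn cT
      by (simp add: q_def power_mult_distrib power_mult[symmetric] mult.commute)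
    also have "\<dots> = (real X / q) ^ n" using Fpos by (simp add: power_divide)
    finally show ?thesis .
  qed
  have BadLe: "card Bad \<le> card (profiles A I)" using card_mono[OF fprof BadS] .
  have pp: "real (card (profiles A I)) > 0" using cprof Fpos cPn by simp
  have "1 - (1 - (\<Sum>k = d + 2..I. B_term I d k)) ^ n \<le> 1 - (real X / q) ^ n"
    using power_mono[OF Xq1 Xq0] by simp
  also have "\<dots> = real (card (profiles A I) - card Bad) / real (card (profiles A I))"
    using ratio BadLe pp by (simp add: of_nat_diff field_simps)
  also have "\<dots> \<le> real (card Good) / real (card (profiles A I))"
    using cGood pp by (intro divide_right_mono) auto
  finally show ?thesis unfolding Good_def n_def m_def .
qed

end
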